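(* Suppose $p_{XY}$ has full support on $\mathcal{X}\times\mathcal{Y}$. Then $(p_{XY},p_{Z|XY})$ is computable with perfect security if and only if for every $y,y'\in\mathcal{Y}$ the following hold: (1) $k(y)=k(y')=:k$ and $\{\vec\alpha_1^{(y)},\dots,\vec\alpha_k^{(y)}\}=\{\vec\alpha_1^{(y')},\dots,\vec\alpha_k^{(y')}\}$; and (2) after indexing the classes so that $\vec\alpha_i^{(y)}=\vec\alpha_i^{(y')}$ for every $i\in[k]$, one has for every $i\in[k]$ and every $x\in\mathcal{X}$: \[\sum_{z\in\mathcal{Z}_i^{(y)}}p_{Z|XY}(z|x,y)=\sum_{z\in\mathcal{Z}_i^{(y')}}p_{Z|XY}(z|x,y').\]
   Context: $\mathcal{X},\mathcal{Y},\mathcal{Z}$ are finite. $(p_{XY},p_{Z|XY})$ is computable with perfect security if there exists a joint p.m.f. $p(u,x,y,z)=p_{XY}(x,y)p_{Z|XY}(z|x,y)p(u|x,y,z)$ (with $U$ on a finite set) satisfying the Markov chains $U-X-Y$, $Z-(U,Y)-X$ and $U-(Y,Z)-X$. For $y\in\mathcal{Y}$ let $\mathcal{Z}^{(y)}=\{z\in\mathcal{Z}:\exists x,\ p_{Z|XY}(z|x,y)>0\}$. For $z,z'\in\mathcal{Z}^{(y)}$, write $z\equiv_y z'$ if the column vectors $(p_{Z|XY}(z|x,y))_{x\in\mathcal{X}}$ and $(p_{Z|XY}(z'|x,y))_{x\in\mathcal{X}}$ are positive scalar multiples of each other; this is an equivalence relation partitioning $\mathcal{Z}^{(y)}=\mathcal{Z}_1^{(y)}\uplus\cdots\uplus\mathcal{Z}_{k(y)}^{(y)}$.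 For each class, the matrix $A_i^{(y)}(x,z)=p_{Z|XY}(z|x,y)$, $(x,z)\in\mathcal{X}\times\mathcal{Z}_i^{(y)}$, is rank one and can be uniquely written as $A_i^{(y)}(x,z)=\vec\alpha_i^{(y)}(x)\vec\gamma_i^{(y)}(z)$ with $\vec\alpha_i^{(y)}$ a probability vector on $\mathcal{X}$. Distinct classes for the same $y$ have distinct $\vec\alpha$'s. *)

theory Defs
  imports Complex_Main
begin

definition prob_ev :: "('w \<Rightarrow> real) \<Rightarrow> 'w set \<Rightarrow> ('w \<Rightarrow> bool) \<Rightarrow> real" where
  "prob_ev P Om E = (\<Sum>w\<in>{w\<in>Om. E w}. P w)"

definition markov_chain ::
  "('w \<Rightarrow> real) \<Rightarrow> 'w set \<Rightarrow> ('w \<Rightarrow> 'a) \<Rightarrow> ('w \<Rightarrow> 'b) \<Rightarrow> ('w \<Rightarrow> 'c) \<Rightarrow> bool" where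
  "markov_chain P Om A B C \<longleftrightarrow>
     (\<forall>a b c. prob_ev P Om (\<lambda>w. A w = a \<and> B w = b \<and> C w = c) * prob_ev P Om (\<lambda>w. B w = b)
            = prob_ev P Om (\<lambda>w. A w = a \<and> B w = b) * prob_ev P Om (\<lambda>w. B w = b \<and> C w = c))"

text \<open>pXY x y = p_XY(x,y);  W x y z = p_{Z|XY}(z|x,y);  q u x y z = p(u|x,y,z).
  U takes values in a finite set Us of naturals.  Sample space elements are (u,x,y,z).\<close>
definition joint ::
  "('x \<Rightarrow> 'y \<Rightarrow> real) \<Rightarrow> ('x \<Rightarrow> 'y \<Rightarrow> 'z \<Rightarrow> real) \<Rightarrow> (nat \<Rightarrow> 'x \<Rightarrow> 'y \<Rightarrow> 'z \<Rightarrow> real)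
     \<Rightarrow> nat \<times> 'x \<times> 'y \<times> 'z \<Rightarrow> real" where
  "joint pXY W q = (\<lambda>(u,x,y,z). pXY x y * W x y z * q u x y z)"

definition perfectly_secure_computable ::
  "('x::finite \<Rightarrow> 'y::finite \<Rightarrow> real) \<Rightarrow> ('x \<Rightarrow> 'y \<Rightarrow> 'z::finite \<Rightarrow> real) \<Rightarrow> bool" where
  "perfectly_secure_computable pXY W \<longleftrightarrow>
     (\<exists>(Us::nat set) q. finite Us \<and>
        (\<forall>u x y z. 0 \<le> q u x y z) \<and> (\<forall>x y z. (\<Sum>u\<in>Us. q u x y z) = 1) \<and>
        (let P = joint pXY W q; Om = Us \<times> (UNIV :: ('x \<times> 'y \<times> 'z) set) in
           markov_chain P Om (\<lambda>(u,x,y,z). u) (\<lambda>(u,x,y,z). x) (\<lambda>(u,x,y,z). y) \<and>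
           markov_chain P Om (\<lambda>(u,x,y,z). z) (\<lambda>(u,x,y,z). (u,y)) (\<lambda>(u,x,y,z). x) \<and>
           markov_chain P Om (\<lambda>(u,x,y,z). u) (\<lambda>(u,x,y,z). (y,z)) (\<lambda>(u,x,y,z). x)))"

definition Zsupp :: "('x \<Rightarrow> 'y \<Rightarrow> 'z \<Rightarrow> real) \<Rightarrow> 'y \<Rightarrow> 'z set" where
  "Zsupp W y = {z. \<exists>x. W x y z > 0}"

definition zequiv :: "('x \<Rightarrow> 'y \<Rightarrow> 'z \<Rightarrow> real) \<Rightarrow> 'y \<Rightarrow> ('z \<times> 'z) set" where
  "zequiv W y = {(z, z'). z \<in> Zsupp W y \<and> z' \<in> Zsupp W y \<and>
                  (\<exists>c>0. \<forall>x. W x y z = c * W x y z')}"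

definition zclasses :: "('x \<Rightarrow> 'y \<Rightarrow> 'z \<Rightarrow> real) \<Rightarrow> 'y \<Rightarrow> 'z set set" where
  "zclasses W y = Zsupp W y // zequiv W y"

definition kcl :: "('x \<Rightarrow> 'y \<Rightarrow> 'z \<Rightarrow> real) \<Rightarrow> 'y \<Rightarrow> nat" where
  "kcl W y = card (zclasses W y)"

definition alpha :: "('x::finite \<Rightarrow> 'y \<Rightarrow> 'z \<Rightarrow> real) \<Rightarrow> 'y \<Rightarrow> 'z set \<Rightarrow> ('x \<Rightarrow> real)" where
  "alpha W y C = (THE a. (\<forall>x. 0 \<le> a x) \<and> (\<Sum>x\<in>UNIV. a x) = 1 \<and>
                         (\<exists>g. \<forall>x. \<forall>z\<in>C. W x y z = a x * g z))"

end

theory Submission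
  imports Defs
begin


lemma pe_expand:
  fixes F :: "nat \<Rightarrow> 'x::finite \<Rightarrow> 'y::finite \<Rightarrow> 'z::finite \<Rightarrow> real"
  assumes "finite Us"
  shows "prob_ev (\<lambda>(u,x,y,z). F u x y z) (Us \<times> (UNIV::('x\<times>'y\<times>'z) set)) E =
     (\<Sum>u\<in>Us. \<Sum>x\<in>UNIV. \<Sum>y\<in>UNIV. \<Sum>z\<in>UNIV. if E (u,x,y,z) then F u x y z else 0)"
proof -
  have "prob_ev (\<lambda>(u,x,y,z). F u x y z) (Us \<times> (UNIV::('x\<times>'y\<times>'z) set)) E
     = (\<Sum>w\<in>Us \<times> (UNIV::('x\<times>'y\<times>'z) set). if E w then (case w of (u,x,y,z) \<Rightarrow> F u x y z) else 0)"
    unfolding prob_ev_def using assms by (simp add: sum.inter_filter)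
  also have "\<dots> = (\<Sum>u\<in>Us. \<Sum>w\<in>(UNIV::('x\<times>'y\<times>'z) set). if E (u,w) then (case w of (x,y,z) \<Rightarrow> F u x y z) else 0)"
    apply (simp add: sum.cartesian_product)
    apply (rule sum.cong[OF refl]) apply (auto split: prod.splits) done
  also have "\<dots> = (\<Sum>u\<in>Us. \<Sum>x\<in>UNIV. \<Sum>y\<in>UNIV. \<Sum>z\<in>UNIV. if E (u,x,y,z) then F u x y z else 0)"
    apply (rule sum.cong[OF refl])
    apply (simp only: UNIV_Times_UNIV[symmetric] sum.cartesian_product[symmetric])
    apply (simp add: sum.cartesian_product)
    apply (rule sum.cong[OF refl]) apply (auto split: prod.splits) done
  finally show ?thesis .
qed

lemma sif: "(\<Sum>x\<in>A. if P then f x else 0) = (if P then sum f A else (0::real))" by simp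
lemma ifc: "(if A \<and> B then x else (0::real)) = (if A then (if B then x else 0) else 0)" by simp


lemma mc1_iff:
  fixes F :: "nat \<Rightarrow> 'x::finite \<Rightarrow> 'y::finite \<Rightarrow> 'z::finite \<Rightarrow> real"
  assumes "finite Us"
  shows "markov_chain (\<lambda>(u,x,y,z). F u x y z) (Us \<times> (UNIV::('x\<times>'y\<times>'z) set))
           (\<lambda>(u,x,y,z). u) (\<lambda>(u,x,y,z). x) (\<lambda>(u,x,y,z). y) \<longleftrightarrow>
   (\<forall>a\<in>Us. \<forall>b c. (\<Sum>z\<in>UNIV. F a b c z) * (\<Sum>u\<in>Us. \<Sum>y\<in>UNIV. \<Sum>z\<in>UNIV. F u b y z)
      = (\<Sum>y\<in>UNIV. \<Sum>z\<in>UNIV. F a b y z) * (\<Sum>u\<in>Us. \<Sum>z\<in>UNIV. F u b c z))"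
  unfolding markov_chain_def pe_expand[OF assms]
  using assms apply (simp add: ifc sif sum.delta sum.delta' cong del: if_weak_cong) by blast

lemma mc2_iff:
  fixes F :: "nat \<Rightarrow> 'x::finite \<Rightarrow> 'y::finite \<Rightarrow> 'z::finite \<Rightarrow> real"
  assumes "finite Us"
  shows "markov_chain (\<lambda>(u,x,y,z). F u x y z) (Us \<times> (UNIV::('x\<times>'y\<times>'z) set))
           (\<lambda>(u,x,y,z). z) (\<lambda>(u,x,y,z). (u,y)) (\<lambda>(u,x,y,z). x) \<longleftrightarrow>
   (\<forall>a b1 b2 c. b1 \<in> Us \<longrightarrow> F b1 c b2 a * (\<Sum>x\<in>UNIV. \<Sum>z\<in>UNIV. F b1 x b2 z)
      = (\<Sum>x\<in>UNIV. F b1 x b2 a) * (\<Sum>z\<in>UNIV. F b1 c b2 z))"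
  unfolding markov_chain_def pe_expand[OF assms]
  using assms apply (simp add: ifc sif sum.delta sum.delta' cong del: if_weak_cong) done

lemma mc3_iff:
  fixes F :: "nat \<Rightarrow> 'x::finite \<Rightarrow> 'y::finite \<Rightarrow> 'z::finite \<Rightarrow> real"
  assumes "finite Us"
  shows "markov_chain (\<lambda>(u,x,y,z). F u x y z) (Us \<times> (UNIV::('x\<times>'y\<times>'z) set))
           (\<lambda>(u,x,y,z). u) (\<lambda>(u,x,y,z). (y,z)) (\<lambda>(u,x,y,z). x) \<longleftrightarrow>
   (\<forall>a\<in>Us. \<forall>b1 b2 c. F a c b1 b2 * (\<Sum>u\<in>Us. \<Sum>x\<in>UNIV. F u x b1 b2)
      = (\<Sum>x\<in>UNIV. F a x b1 b2) * (\<Sum>u\<in>Us. F u c b1 b2))"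
  unfolding markov_chain_def pe_expand[OF assms]
  using assms apply (simp add: ifc sif sum.delta sum.delta' cong del: if_weak_cong) by blast



definition nrm :: "('x::finite \<Rightarrow> real) \<Rightarrow> 'x \<Rightarrow> real" where
  "nrm f = (\<lambda>x. f x / (\<Sum>x'\<in>UNIV. f x'))"
definition NN :: "('x::finite \<Rightarrow> 'y \<Rightarrow> 'z \<Rightarrow> real) \<Rightarrow> 'y \<Rightarrow> 'z \<Rightarrow> 'x \<Rightarrow> real" where
  "NN W y z = nrm (\<lambda>x. W x y z)"
definition KK :: "('x::finite \<Rightarrow> 'y \<Rightarrow> 'z \<Rightarrow> real) \<Rightarrow> 'y \<Rightarrow> 'z \<Rightarrow> 'z set" where
  "KK W y z = {z'\<in>Zsupp W y. NN W y z' = NN W y z}"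
definition SS :: "('x::finite \<Rightarrow> 'y \<Rightarrow> 'z \<Rightarrow> real) \<Rightarrow> 'y \<Rightarrow> ('x \<Rightarrow> real) \<Rightarrow> 'x \<Rightarrow> real" where
  "SS W y a x = (\<Sum>z\<in>{z\<in>Zsupp W y. NN W y z = a}. W x y z)"

lemma nrm_scale:
  fixes f g :: "'x::finite \<Rightarrow> real"
  assumes "\<forall>x. f x = c * g x" "c \<noteq> 0"
  shows "nrm f = nrm g"
proof -
  have s: "sum f UNIV = c * sum g UNIV" using assms(1) by (simp add: sum_distrib_left)
  show ?thesis unfolding nrm_def
  proof
    fix x show "f x / sum f UNIV = g x / sum g UNIV"
      unfolding s using assms by (cases "sum g UNIV = 0") simp_all
  qed
qed

lemma W_decomp:
  fixes W :: "'x::finite \<Rightarrow> 'y \<Rightarrow> 'z \<Rightarrow> real"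
  assumes "\<forall>x y z. 0 \<le> W x y z"
  shows "W x y z = NN W y z x * (\<Sum>x'\<in>UNIV. W x' y z)"
proof (cases "(\<Sum>x'\<in>UNIV. W x' y z) = 0")
  case True
  then have "\<forall>x'. W x' y z = 0" using assms by (simp add: sum_nonneg_eq_0_iff)
  then show ?thesis by (simp add: NN_def nrm_def)
next
  case False
  then show ?thesis by (simp add: NN_def nrm_def)
qed

lemma zsupp_sum_pos:
  fixes W :: "'x::finite \<Rightarrow> 'y \<Rightarrow> 'z \<Rightarrow> real"
  assumes "\<forall>x y z. 0 \<le> W x y z" "z \<in> Zsupp W y"
  shows "(\<Sum>x'\<in>UNIV. W x' y z) > 0"
proof -
  obtain x where "W x y z > 0" using assms(2) by (auto simp: Zsupp_def)
  then show ?thesis using assms(1) by (intro sum_pos2[of UNIV x]) auto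
qed

lemma NN_prob:
  fixes W :: "'x::finite \<Rightarrow> 'y \<Rightarrow> 'z \<Rightarrow> real"
  assumes "\<forall>x y z. 0 \<le> W x y z" "z \<in> Zsupp W y"
  shows "(\<forall>x. 0 \<le> NN W y z x) \<and> (\<Sum>x\<in>UNIV. NN W y z x) = 1"
proof -
  have p: "(\<Sum>x'\<in>UNIV. W x' y z) > 0" using zsupp_sum_pos[OF assms] .
  have "(\<Sum>x\<in>UNIV. NN W y z x) = (\<Sum>x\<in>UNIV. W x y z) / (\<Sum>x'\<in>UNIV. W x' y z)"
    unfolding NN_def nrm_def by (rule sum_divide_distrib[symmetric])
  then have "(\<Sum>x\<in>UNIV. NN W y z x) = 1" using p by simp
  moreover have "\<forall>x. 0 \<le> NN W y z x" using p assms(1) by (simp add: NN_def nrm_def)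
  ultimately show ?thesis by simp
qed

lemma zequiv_iff:
  fixes W :: "'x::finite \<Rightarrow> 'y \<Rightarrow> 'z \<Rightarrow> real"
  assumes nn: "\<forall>x y z. 0 \<le> W x y z" and z: "z \<in> Zsupp W y" and z': "z' \<in> Zsupp W y"
  shows "(z,z') \<in> zequiv W y \<longleftrightarrow> NN W y z = NN W y z'"
proof
  assume "(z,z') \<in> zequiv W y"
  then obtain c where "c > 0" "\<forall>x. W x y z = c * W x y z'" by (auto simp: zequiv_def)
  then show "NN W y z = NN W y z'" unfolding NN_def by (intro nrm_scale) auto
next
  assume e: "NN W y z = NN W y z'"
  define s where "s = (\<Sum>x'\<in>UNIV. W x' y z)"
  define s' where "s' = (\<Sum>x'\<in>UNIV. W x' y z')"
  have sp: "s > 0" "s' > 0" unfolding s_def s'_def using zsupp_sum_pos[OF nn] z z' by auto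
  have "\<forall>x. W x y z = (s / s') * W x y z'"
  proof
    fix x
    have "W x y z = NN W y z x * s" unfolding s_def by (rule W_decomp[OF nn])
    also have "\<dots> = NN W y z' x * s" using e by simp
    also have "\<dots> = (s/s') * (NN W y z' x * s')" using sp by simp
    also have "NN W y z' x * s' = W x y z'" unfolding s'_def by (rule W_decomp[OF nn, symmetric])
    finally show "W x y z = (s / s') * W x y z'" .
  qed
  then show "(z,z') \<in> zequiv W y" using z z' sp unfolding zequiv_def
    by (auto intro!: exI[of _ "s/s'"])
qed

lemma zclasses_eq:
  fixes W :: "'x::finite \<Rightarrow> 'y \<Rightarrow> 'z \<Rightarrow> real"
  assumes nn: "\<forall>x y z. 0 \<le> W x y z"
  shows "zclasses W y = KK W y ` Zsupp W y"
proof -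
  have "zequiv W y `` {z} = KK W y z" if zs: "z \<in> Zsupp W y" for z
  proof (rule set_eqI)
    fix z'
    show "z' \<in> zequiv W y `` {z} \<longleftrightarrow> z' \<in> KK W y z"
    proof (cases "z' \<in> Zsupp W y")
      case True
      then show ?thesis using zequiv_iff[OF nn zs True] unfolding KK_def by auto
    next
      case False
      then show ?thesis unfolding KK_def zequiv_def by auto
    qed
  qed
  then show ?thesis unfolding zclasses_def quotient_def by auto
qed

lemma alpha_KK:
  fixes W :: "'x::finite \<Rightarrow> 'y \<Rightarrow> 'z \<Rightarrow> real"
  assumes nn: "\<forall>x y z. 0 \<le> W x y z" and z: "z \<in> Zsupp W y"
  shows "alpha W y (KK W y z) = NN W y z"
  unfolding alpha_def
proof (rule the_equality)
  show "(\<forall>x. 0 \<le> NN W y z x) \<and> (\<Sum>x\<in>UNIV. NN W y z x) = 1 \<and>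
    (\<exists>g. \<forall>x. \<forall>z'\<in>KK W y z. W x y z' = NN W y z x * g z')"
  proof -
    have "\<forall>x. \<forall>z'\<in>KK W y z. W x y z' = NN W y z x * (\<Sum>x'\<in>UNIV. W x' y z')"
    proof (intro allI ballI)
      fix x z' assume "z' \<in> KK W y z"
      then have "NN W y z' = NN W y z" by (simp add: KK_def)
      then show "W x y z' = NN W y z x * (\<Sum>x'\<in>UNIV. W x' y z')"
        using W_decomp[OF nn, of x y z'] by metis
    qed
    then have "\<exists>g. \<forall>x. \<forall>z'\<in>KK W y z. W x y z' = NN W y z x * g z'" by (rule exI[of _ "\<lambda>z'. \<Sum>x'\<in>UNIV. W x' y z'"])
    then show ?thesis using NN_prob[OF nn z] by simp
  qed
next
  fix a assume a: "(\<forall>x. 0 \<le> a x) \<and> (\<Sum>x\<in>UNIV. a x) = 1 \<and>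
    (\<exists>g. \<forall>x. \<forall>z'\<in>KK W y z. W x y z' = a x * g z')"
  then obtain g where g: "\<forall>x. W x y z = a x * g z" using z by (auto simp: KK_def)
  have "(\<Sum>x\<in>UNIV. W x y z) = g z" using g a by (simp add: sum_distrib_right[symmetric])
  then have gp: "g z > 0" using zsupp_sum_pos[OF nn z] by simp
  show "a = NN W y z"
  proof
    fix x show "a x = NN W y z x"
      using g gp \<open>(\<Sum>x\<in>UNIV. W x y z) = g z\<close> by (simp add: NN_def nrm_def)
  qed
qed



lemma img_alpha:
  fixes W :: "'x::finite \<Rightarrow> 'y \<Rightarrow> 'z \<Rightarrow> real"
  assumes nn: "\<forall>x y z. 0 \<le> W x y z"
  shows "alpha W y ` zclasses W y = NN W y ` Zsupp W y"
  unfolding zclasses_eq[OF nn] image_image using alpha_KK[OF nn] by (auto intro!: image_cong)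

lemma sum_KK:
  "(\<Sum>z'\<in>KK W y z. W x y z') = SS W y (NN W y z) x"
  unfolding KK_def SS_def by simp

lemma kcl_eq:
  fixes W :: "'x::finite \<Rightarrow> 'y \<Rightarrow> 'z \<Rightarrow> real"
  assumes nn: "\<forall>x y z. 0 \<le> W x y z"
  shows "kcl W y = card (NN W y ` Zsupp W y)"
proof -
  have "inj_on (alpha W y) (zclasses W y)"
  proof (rule inj_onI)
    fix C C' assume C: "C \<in> zclasses W y" and C': "C' \<in> zclasses W y" and e: "alpha W y C = alpha W y C'"
    obtain z where z: "z \<in> Zsupp W y" "C = KK W y z" using C zclasses_eq[OF nn] by auto
    obtain z' where z': "z' \<in> Zsupp W y" "C' = KK W y z'" using C' zclasses_eq[OF nn] by auto
    have "NN W y z = NN W y z'" using e z z' alpha_KK[OF nn] by simp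
    then show "C = C'" using z z' unfolding KK_def by simp
  qed
  then show ?thesis unfolding kcl_def using card_image img_alpha[OF nn] by metis
qed

lemma rhs_iff:
  fixes W :: "'x::finite \<Rightarrow> 'y \<Rightarrow> 'z \<Rightarrow> real"
  assumes nn: "\<forall>x y z. 0 \<le> W x y z"
  shows "(\<forall>y y'. kcl W y = kcl W y' \<and>
            alpha W y ` zclasses W y = alpha W y' ` zclasses W y' \<and>
            (\<forall>C\<in>zclasses W y. \<forall>C'\<in>zclasses W y'. alpha W y C = alpha W y' C' \<longrightarrow>
               (\<forall>x. (\<Sum>z\<in>C. W x y z) = (\<Sum>z\<in>C'. W x y' z))))
   \<longleftrightarrow> (\<forall>y y'. NN W y ` Zsupp W y = NN W y' ` Zsupp W y' \<and>
            (\<forall>a\<in>NN W y ` Zsupp W y. \<forall>x. SS W y a x = SS W y' a x))" (is "?L \<longleftrightarrow> ?R")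
proof
  assume L: ?L
  show ?R
  proof (intro allI conjI ballI)
    fix y y'
    show img: "NN W y ` Zsupp W y = NN W y' ` Zsupp W y'"
      using L img_alpha[OF nn] by metis
    fix a x assume a: "a \<in> NN W y ` Zsupp W y"
    then obtain z where z: "z \<in> Zsupp W y" "a = NN W y z" by auto
    from a img obtain z' where z': "z' \<in> Zsupp W y'" "a = NN W y' z'" by auto
    have "KK W y z \<in> zclasses W y" "KK W y' z' \<in> zclasses W y'"
      using z z' zclasses_eq[OF nn] by auto
    moreover have "alpha W y (KK W y z) = alpha W y' (KK W y' z')"
      using z z' alpha_KK[OF nn] by simp
    ultimately have "(\<Sum>z\<in>KK W y z. W x y z) = (\<Sum>z\<in>KK W y' z'. W x y' z)" using L by blast
    then show "SS W y a x = SS W y' a x" using z z' sum_KK by metis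
  qed
next
  assume R: ?R
  show ?L
  proof (intro allI conjI ballI impI)
    fix y y'
    show "kcl W y = kcl W y'" using R kcl_eq[OF nn] by metis
    show "alpha W y ` zclasses W y = alpha W y' ` zclasses W y'" using R img_alpha[OF nn] by metis
    fix C C' x assume C: "C \<in> zclasses W y" and C': "C' \<in> zclasses W y'" and e: "alpha W y C = alpha W y' C'"
    obtain z where z: "z \<in> Zsupp W y" "C = KK W y z" using C zclasses_eq[OF nn] by auto
    obtain z' where z': "z' \<in> Zsupp W y'" "C' = KK W y' z'" using C' zclasses_eq[OF nn] by auto
    have e2: "NN W y z = NN W y' z'" using e z z' alpha_KK[OF nn] by simp
    have "SS W y (NN W y z) x = SS W y' (NN W y z) x" using R z by blast
    then show "(\<Sum>z\<in>C. W x y z) = (\<Sum>z\<in>C'. W x y' z)" using z z' e2 sum_KK by metis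
  qed
qed



lemma forward:
  fixes pXY :: "'x::finite \<Rightarrow> 'y::finite \<Rightarrow> real"
    and W :: "'x \<Rightarrow> 'y \<Rightarrow> 'z::finite \<Rightarrow> real"
  assumes full_support: "\<forall>x y. pXY x y > 0"
    and nn: "\<forall>x y z. 0 \<le> W x y z"
    and W_sum: "\<forall>x y. (\<Sum>z\<in>UNIV. W x y z) = 1"
    and psc: "perfectly_secure_computable pXY W"
  shows "\<forall>y y'. NN W y ` Zsupp W y = NN W y' ` Zsupp W y' \<and>
            (\<forall>a\<in>NN W y ` Zsupp W y. \<forall>x. SS W y a x = SS W y' a x)"
proof -
  obtain Us q where finUs: "finite Us" and qnn: "\<forall>u x y z. 0 \<le> q u x y z"
    and qsum: "\<forall>x y z. (\<Sum>u\<in>Us. q u x y z) = 1"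
    and ch: "let P = joint pXY W q; Om = Us \<times> (UNIV :: ('x \<times> 'y \<times> 'z) set) in
           markov_chain P Om (\<lambda>(u,x,y,z). u) (\<lambda>(u,x,y,z). x) (\<lambda>(u,x,y,z). y) \<and>
           markov_chain P Om (\<lambda>(u,x,y,z). z) (\<lambda>(u,x,y,z). (u,y)) (\<lambda>(u,x,y,z). x) \<and>
           markov_chain P Om (\<lambda>(u,x,y,z). u) (\<lambda>(u,x,y,z). (y,z)) (\<lambda>(u,x,y,z). x)"
    using psc unfolding perfectly_secure_computable_def by blast
  define F where "F u x y z = pXY x y * W x y z * q u x y z" for u x y z
  have jointF: "joint pXY W q = (\<lambda>(u,x,y,z). F u x y z)" unfolding joint_def F_def by simp
  have chs: "markov_chain (\<lambda>(u,x,y,z). F u x y z) (Us \<times> (UNIV :: ('x \<times> 'y \<times> 'z) set)) (\<lambda>(u,x,y,z). u) (\<lambda>(u,x,y,z). x) (\<lambda>(u,x,y,z). y) \<and>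
           markov_chain (\<lambda>(u,x,y,z). F u x y z) (Us \<times> (UNIV :: ('x \<times> 'y \<times> 'z) set)) (\<lambda>(u,x,y,z). z) (\<lambda>(u,x,y,z). (u,y)) (\<lambda>(u,x,y,z). x) \<and>
           markov_chain (\<lambda>(u,x,y,z). F u x y z) (Us \<times> (UNIV :: ('x \<times> 'y \<times> 'z) set)) (\<lambda>(u,x,y,z). u) (\<lambda>(u,x,y,z). (y,z)) (\<lambda>(u,x,y,z). x)"
    using ch unfolding Let_def jointF .
  have c1: "\<forall>a\<in>Us. \<forall>b c. (\<Sum>z\<in>UNIV. F a b c z) * (\<Sum>u\<in>Us. \<Sum>y\<in>UNIV. \<Sum>z\<in>UNIV. F u b y z)
      = (\<Sum>y\<in>UNIV. \<Sum>z\<in>UNIV. F a b y z) * (\<Sum>u\<in>Us. \<Sum>z\<in>UNIV. F u b c z)"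
    using chs mc1_iff[OF finUs] by blast
  have c2: "\<forall>a b1 b2 c. b1 \<in> Us \<longrightarrow> F b1 c b2 a * (\<Sum>x\<in>UNIV. \<Sum>z\<in>UNIV. F b1 x b2 z)
      = (\<Sum>x\<in>UNIV. F b1 x b2 a) * (\<Sum>z\<in>UNIV. F b1 c b2 z)"
    using chs mc2_iff[OF finUs] by blast
  have c3: "\<forall>a\<in>Us. \<forall>b1 b2 c. F a c b1 b2 * (\<Sum>u\<in>Us. \<Sum>x\<in>UNIV. F u x b1 b2)
      = (\<Sum>x\<in>UNIV. F a x b1 b2) * (\<Sum>u\<in>Us. F u c b1 b2)"
    using chs mc3_iff[OF finUs] by blast
  define Q where "Q u x y z = W x y z * q u x y z" for u x y z
  define V where "V u x y = (\<Sum>z\<in>UNIV. Q u x y z)" for u x y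
  define R where "R u y = (\<Sum>x\<in>UNIV. pXY x y * V u x y)" for u y
  define S where "S u y z = (\<Sum>x\<in>UNIV. pXY x y * Q u x y z)" for u y z
  define D where "D y z = (\<Sum>x\<in>UNIV. pXY x y * W x y z)" for y z
  have FQ: "F u x y z = pXY x y * Q u x y z" for u x y z unfolding F_def Q_def by simp
  have pp: "pXY x y > 0" for x y using full_support by blast
  have Qnn: "0 \<le> Q u x y z" for u x y z unfolding Q_def using nn qnn by simp
  have Vnn: "0 \<le> V u x y" for u x y unfolding V_def using Qnn by (simp add: sum_nonneg)
  have Snn: "0 \<le> S u y z" for u y z unfolding S_def using Qnn pp
    by (intro sum_nonneg) (simp add: less_imp_le)
  have qle1: "q u x y z \<le> 1" if "u \<in> Us" for u x y z
  proof -
    have "q u x y z \<le> (\<Sum>u\<in>Us. q u x y z)" using that finUs qnn by (intro member_le_sum) auto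
    then show ?thesis using qsum by simp
  qed
  have sumQ: "(\<Sum>u\<in>Us. Q u x y z) = W x y z" for x y z
    unfolding Q_def using qsum by (simp add: sum_distrib_left[symmetric])
  have C1: "V u x y = V u x y'" if u: "u \<in> Us" for u x y y'
  proof -
    define px where "px = (\<Sum>y\<in>UNIV. pXY x y)"
    define M where "M = (\<Sum>y\<in>UNIV. pXY x y * V u x y)"
    have pxp: "px > 0" unfolding px_def using pp by (intro sum_pos) auto
    have e: "V u x c = M / px" for c
    proof -
      have s1: "(\<Sum>z\<in>UNIV. F u x c z) = pXY x c * V u x c"
        unfolding FQ V_def by (simp add: sum_distrib_left)
      have s2: "(\<Sum>u\<in>Us. \<Sum>z\<in>UNIV. F u x y z) = pXY x y" for y
      proof -
        have "(\<Sum>u\<in>Us. \<Sum>z\<in>UNIV. F u x y z) = (\<Sum>z\<in>UNIV. \<Sum>u\<in>Us. F u x y z)" by (rule sum.swap)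
        also have "\<dots> = (\<Sum>z\<in>UNIV. pXY x y * W x y z)"
          unfolding FQ by (simp add: sum_distrib_left[symmetric] sumQ)
        also have "\<dots> = pXY x y" using W_sum by (simp add: sum_distrib_left[symmetric])
        finally show ?thesis .
      qed
      have "(\<Sum>u\<in>Us. \<Sum>y\<in>UNIV. \<Sum>z\<in>UNIV. F u x y z) = (\<Sum>y\<in>UNIV. \<Sum>u\<in>Us. \<Sum>z\<in>UNIV. F u x y z)"
        by (rule sum.swap)
      also have "\<dots> = px" unfolding px_def using s2 by simp
      finally have s3: "(\<Sum>u\<in>Us. \<Sum>y\<in>UNIV. \<Sum>z\<in>UNIV. F u x y z) = px" .
      have s4: "(\<Sum>y\<in>UNIV. \<Sum>z\<in>UNIV. F u x y z) = M"
        unfolding M_def FQ V_def by (simp add: sum_distrib_left)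
      have "(\<Sum>z\<in>UNIV. F u x c z) * (\<Sum>u\<in>Us. \<Sum>y\<in>UNIV. \<Sum>z\<in>UNIV. F u x y z)
        = (\<Sum>y\<in>UNIV. \<Sum>z\<in>UNIV. F u x y z) * (\<Sum>u\<in>Us. \<Sum>z\<in>UNIV. F u x c z)"
        using c1 u by blast
      then have "pXY x c * V u x c * px = M * pXY x c" by (simp only: s1 s2 s3 s4)
      then have "V u x c * px = M" using pp[of x c] by (simp add: mult.commute mult.left_commute)
      then show ?thesis using pxp by (simp add: field_simps)
    qed
    show ?thesis using e[of y] e[of y'] by simp
  qed
  have C2: "Q u x y z * R u y = S u y z * V u x y" if u: "u \<in> Us" for u x y z
  proof -
    have "F u x y z * (\<Sum>x\<in>UNIV. \<Sum>z\<in>UNIV. F u x y z)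
      = (\<Sum>x\<in>UNIV. F u x y z) * (\<Sum>z\<in>UNIV. F u x y z)" using c2 u by blast
    moreover have "(\<Sum>x\<in>UNIV. \<Sum>z\<in>UNIV. F u x y z) = R u y"
      unfolding R_def V_def FQ by (simp add: sum_distrib_left)
    moreover have "(\<Sum>x\<in>UNIV. F u x y z) = S u y z" unfolding S_def FQ ..
    moreover have "(\<Sum>z\<in>UNIV. F u x y z) = pXY x y * V u x y"
      unfolding V_def FQ by (simp add: sum_distrib_left)
    ultimately have "pXY x y * (Q u x y z * R u y) = pXY x y * (S u y z * V u x y)"
      unfolding FQ by (simp add: mult.commute mult.left_commute)
    then show ?thesis using pp[of x y] by simp
  qed
  have C3: "Q u x y z * D y z = S u y z * W x y z" if u: "u \<in> Us" for u x y z
  proof -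
    have "F u x y z * (\<Sum>u\<in>Us. \<Sum>x\<in>UNIV. F u x y z)
      = (\<Sum>x\<in>UNIV. F u x y z) * (\<Sum>u\<in>Us. F u x y z)" using c3 u by blast
    moreover have "(\<Sum>u\<in>Us. \<Sum>x\<in>UNIV. F u x y z) = D y z"
    proof -
      have "(\<Sum>u\<in>Us. \<Sum>x\<in>UNIV. F u x y z) = (\<Sum>x\<in>UNIV. \<Sum>u\<in>Us. F u x y z)" by (rule sum.swap)
      also have "\<dots> = D y z" unfolding D_def FQ by (simp add: sum_distrib_left[symmetric] sumQ)
      finally show ?thesis .
    qed
    moreover have "(\<Sum>x\<in>UNIV. F u x y z) = S u y z" unfolding S_def FQ ..
    moreover have "(\<Sum>u\<in>Us. F u x y z) = pXY x y * W x y z"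
      unfolding FQ by (simp add: sum_distrib_left[symmetric] sumQ)
    ultimately have "pXY x y * (Q u x y z * D y z) = pXY x y * (S u y z * W x y z)"
      unfolding FQ by (simp add: mult.commute mult.left_commute)
    then show ?thesis using pp[of x y] by simp
  qed
  have pQnn: "0 \<le> pXY x y * Q u x y z" for u x y z
    using pp[of x y] Qnn[of u x y z] by (simp add: less_imp_le)
  have S0: "Q u x y z = 0" if "S u y z = 0" for u x y z
  proof -
    have "\<forall>x\<in>UNIV. pXY x y * Q u x y z = 0"
      using that unfolding S_def
      by (subst sum_nonneg_eq_0_iff[symmetric]) (auto intro: pQnn)
    then have "pXY x y * Q u x y z = 0" by blast
    then show ?thesis using pp[of x y] by simp
  qed
  have key: "z \<in> Zsupp W y \<and> NN W y z = nrm (\<lambda>x. V u x y)" if u: "u \<in> Us" and Sp: "S u y z > 0" for u y z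
  proof -
    obtain x0 where x0: "pXY x0 y * Q u x0 y z > 0"
    proof (rule ccontr)
      assume "\<not> thesis"
      then have "\<forall>x. pXY x y * Q u x y z \<le> 0" using that by (meson not_le)
      then have "S u y z \<le> 0" unfolding S_def by (simp add: sum_nonpos)
      then show False using Sp by simp
    qed
    then have "Q u x0 y z > 0" using pp[of x0 y] by (simp add: zero_less_mult_iff)
    then have Wp: "W x0 y z > 0" unfolding Q_def using nn qnn by (metis less_eq_real_def mult_eq_0_iff)
    then have zs: "z \<in> Zsupp W y" unfolding Zsupp_def by blast
    have Dp: "D y z > 0" unfolding D_def
      using Wp pp nn by (intro sum_pos2[of UNIV x0]) (auto simp: less_imp_le)
    have "S u y z \<le> R u y" unfolding S_def R_def
    proof (rule sum_mono)
      fix x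
      have "Q u x y z \<le> V u x y" unfolding V_def using Qnn by (intro member_le_sum) auto
      then show "pXY x y * Q u x y z \<le> pXY x y * V u x y" using pp[of x y] by simp
    qed
    then have Rp: "R u y > 0" using Sp by simp
    have Weq: "\<forall>x. W x y z = (D y z / R u y) * V u x y"
    proof
      fix x
      have "W x y z * S u y z * R u y = D y z * (Q u x y z * R u y)"
        using C3[OF u, of x y z] by (simp add: algebra_simps)
      also have "\<dots> = D y z * S u y z * V u x y" using C2[OF u, of x y z] by simp
      finally have "W x y z * (S u y z * R u y) = (D y z * V u x y) * (S u y z)"
        by (simp add: algebra_simps)
      then have "W x y z * R u y = D y z * V u x y" using Sp Rp by (simp add: algebra_simps)
      then show "W x y z = (D y z / R u y) * V u x y" using Rp by (simp add: field_simps)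
    qed
    have "NN W y z = nrm (\<lambda>x. V u x y)" unfolding NN_def
      by (rule nrm_scale[OF Weq]) (use Dp Rp in simp)
    then show ?thesis using zs by simp
  qed
  define v where "v u x = V u x undefined" for u x
  define al where "al u = nrm (v u)" for u
  have Vv: "V u x y = v u x" if "u \<in> Us" for u x y unfolding v_def using C1[OF that] .
  have Vv': "(\<lambda>x. V u x y) = v u" if "u \<in> Us" for u y using Vv[OF that] by auto
  have key2: "z \<in> Zsupp W y \<and> NN W y z = al u" if u: "u \<in> Us" and Sp: "S u y z > 0" for u y z
    using key[OF u Sp] Vv'[OF u] unfolding al_def by simp
  define T where "T a x = (\<Sum>u\<in>Us. if al u = a then v u x else 0)" for a x
  have SST: "SS W y a x = T a x" for y a x
  proof -
    define Za where "Za = {z\<in>Zsupp W y. NN W y z = a}"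
    have per: "(\<Sum>z\<in>Za. Q u x y z) = (if al u = a then v u x else 0)" if u: "u \<in> Us" for u
    proof (cases "al u = a")
      case True
      have "(\<Sum>z\<in>Za. Q u x y z) = (\<Sum>z\<in>UNIV. Q u x y z)"
      proof (rule sum.mono_neutral_left)
        show "\<forall>i\<in>UNIV - Za. Q u x y i = 0"
        proof
          fix z assume z: "z \<in> UNIV - Za"
          have "\<not> S u y z > 0"
          proof
            assume "S u y z > 0"
            then have "z \<in> Zsupp W y \<and> NN W y z = al u" using key2[OF u] by blast
            then show False using z True unfolding Za_def by simp
          qed
          then have "S u y z = 0" using Snn[of u y z] by simp
          then show "Q u x y z = 0" by (rule S0)
        qed
      qed auto
      also have "\<dots> = v u x" using Vv[OF u] unfolding V_def by simp
      finally show ?thesis using True by simp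
    next
      case False
      have "\<forall>z\<in>Za. Q u x y z = 0"
      proof
        fix z assume z: "z \<in> Za"
        have "\<not> S u y z > 0"
        proof
          assume "S u y z > 0"
          then have "z \<in> Zsupp W y \<and> NN W y z = al u" using key2[OF u] by blast
          then show False using z False unfolding Za_def by simp
        qed
        then have "S u y z = 0" using Snn[of u y z] by simp
        then show "Q u x y z = 0" by (rule S0)
      qed
      then show ?thesis using False by simp
    qed
    have "SS W y a x = (\<Sum>z\<in>Za. \<Sum>u\<in>Us. Q u x y z)" unfolding SS_def Za_def using sumQ by simp
    also have "\<dots> = (\<Sum>u\<in>Us. \<Sum>z\<in>Za. Q u x y z)" by (rule sum.swap)
    also have "\<dots> = T a x" unfolding T_def using per by (intro sum.cong) auto
    finally show ?thesis .
  qed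
  define Aset where "Aset = {al u | u. u \<in> Us \<and> (\<exists>x. v u x > 0)}"
  have Img: "NN W y ` Zsupp W y = Aset" for y
  proof
    show "NN W y ` Zsupp W y \<subseteq> Aset"
    proof
      fix b assume "b \<in> NN W y ` Zsupp W y"
      then obtain z where z: "z \<in> Zsupp W y" "b = NN W y z" by blast
      then obtain x where Wp: "W x y z > 0" unfolding Zsupp_def by blast
      obtain u where u: "u \<in> Us" "q u x y z > 0"
      proof (rule ccontr)
        assume "\<not> thesis"
        then have "\<forall>u\<in>Us. q u x y z = 0" using that qnn by (metis less_eq_real_def)
        then have "(\<Sum>u\<in>Us. q u x y z) = 0" by simp
        then show False using qsum by simp
      qed
      have Qp: "Q u x y z > 0" unfolding Q_def using Wp u(2) by simp
      have "pXY x y * Q u x y z \<le> S u y z" unfolding S_def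
        using pp Qnn by (intro member_le_sum) (auto intro: pQnn)
      moreover have "pXY x y * Q u x y z > 0" using Qp pp[of x y] by simp
      ultimately have Sp: "S u y z > 0" by linarith
      have "b = al u" using key2[OF u(1) Sp] z by simp
      moreover have "Q u x y z \<le> V u x y" unfolding V_def using Qnn by (intro member_le_sum) auto
      then have "v u x > 0" using Qp Vv[OF u(1)] by simp
      ultimately show "b \<in> Aset" unfolding Aset_def using u(1) by blast
    qed
    show "Aset \<subseteq> NN W y ` Zsupp W y"
    proof
      fix b assume "b \<in> Aset"
      then obtain u x where u: "u \<in> Us" "v u x > 0" "b = al u" unfolding Aset_def by blast
      have Vp: "V u x y > 0" using Vv u by simp
      obtain z where Qp: "Q u x y z > 0"
      proof (rule ccontr)
        assume "\<not> thesis"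
        then have "\<forall>z. Q u x y z \<le> 0" using that by (meson not_le)
        then have "V u x y \<le> 0" unfolding V_def by (simp add: sum_nonpos)
        then show False using Vp by simp
      qed
      have "pXY x y * Q u x y z \<le> S u y z" unfolding S_def
        using pp Qnn by (intro member_le_sum) (auto intro: pQnn)
      moreover have "pXY x y * Q u x y z > 0" using Qp pp[of x y] by simp
      ultimately have Sp: "S u y z > 0" by linarith
      then show "b \<in> NN W y ` Zsupp W y" using key2[OF u(1) Sp] u(3) by force
    qed
  qed
  show ?thesis
  proof (intro allI conjI ballI)
    fix y y' show "NN W y ` Zsupp W y = NN W y' ` Zsupp W y'" using Img by simp
    fix a x show "SS W y a x = SS W y' a x" using SST by simp
  qed
qed



lemma W_zero_out:
  fixes W :: "'x::finite \<Rightarrow> 'y \<Rightarrow> 'z \<Rightarrow> real"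
  assumes nn: "\<forall>x y z. 0 \<le> W x y z" and "z \<notin> Zsupp W y"
  shows "W x y z = 0"
  using assms unfolding Zsupp_def by (metis (mono_tags, lifting) less_eq_real_def mem_Collect_eq)

lemma backward:
  fixes pXY :: "'x::finite \<Rightarrow> 'y::finite \<Rightarrow> real"
    and W :: "'x \<Rightarrow> 'y \<Rightarrow> 'z::finite \<Rightarrow> real"
  assumes full_support: "\<forall>x y. pXY x y > 0"
    and nn: "\<forall>x y z. 0 \<le> W x y z"
    and W_sum: "\<forall>x y. (\<Sum>z\<in>UNIV. W x y z) = 1"
    and R: "\<forall>y y'. NN W y ` Zsupp W y = NN W y' ` Zsupp W y' \<and>
            (\<forall>a\<in>NN W y ` Zsupp W y. \<forall>x. SS W y a x = SS W y' a x)"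
  shows "perfectly_secure_computable pXY W"
proof -
  define A where "A = NN W undefined ` Zsupp W undefined"
  have Ay: "NN W y ` Zsupp W y = A" for y using R unfolding A_def by blast
  have finA: "finite A" unfolding A_def by simp
  obtain f :: "('x \<Rightarrow> real) \<Rightarrow> nat" and n where f: "f ` A = {i. i < n}" "inj_on f A"
    using finite_imp_inj_to_nat_seg[OF finA] by blast
  define idx where "idx y z = (if z \<in> Zsupp W y then f (NN W y z) else 0)" for y z
  define Us where "Us = {..n}"
  define I where "I u y z = (if u = idx y z then 1 else (0::real))" for u y z
  define q where "q u (x::'x) y z = I u y z" for u x y z
  have finUs: "finite Us" unfolding Us_def by simp
  have idxUs: "idx y z \<in> Us" for y z
  proof (cases "z \<in> Zsupp W y")
    case True
    then have "NN W y z \<in> A" using Ay by blast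
    then have "f (NN W y z) < n" using f by blast
    then show ?thesis using True unfolding idx_def Us_def by simp
  qed (simp add: idx_def Us_def)
  have NA: "NN W y z \<in> A" if "z \<in> Zsupp W y" for y z by (metis Ay imageI that)
  have Isum: "(\<Sum>u\<in>Us. I u y z) = 1" for y z
    using idxUs[of y z] finUs unfolding I_def by (simp add: sum.delta')
  define F where "F u x y z = pXY x y * W x y z * q u x y z" for u x y z
  define V where "V u x y = (\<Sum>z\<in>UNIV. W x y z * I u y z)" for u x y
  define G where "G u x y = (\<Sum>z\<in>{z\<in>Zsupp W y. f (NN W y z) = u}. W x y z)" for u x y
  have VG: "V u x y = G u x y" for u x y
  proof -
    have "V u x y = (\<Sum>z\<in>UNIV. if z \<in> Zsupp W y \<and> f (NN W y z) = u then W x y z else 0)"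
      unfolding V_def
    proof (rule sum.cong[OF refl])
      fix z show "W x y z * I u y z = (if z \<in> Zsupp W y \<and> f (NN W y z) = u then W x y z else 0)"
        using W_zero_out[OF nn, of z y x] unfolding I_def idx_def by auto
    qed
    also have "\<dots> = (\<Sum>z\<in>{z\<in>UNIV. z \<in> Zsupp W y \<and> f (NN W y z) = u}. W x y z)"
      by (rule sum.inter_filter[symmetric]) simp
    also have "\<dots> = G u x y" unfolding G_def by (rule sum.cong) auto
    finally show ?thesis .
  qed
  have Gindep: "G u x y = G u x y'" for u x y y'
  proof (cases "u \<in> f ` A")
    case True
    then obtain a where a: "a \<in> A" "u = f a" by blast
    have eq: "{z\<in>Zsupp W y. f (NN W y z) = u} = {z\<in>Zsupp W y. NN W y z = a}" for y
    proof -
      show ?thesis using a f(2) NA by (auto dest: inj_onD)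
    qed
    have "G u x y = SS W y a x" unfolding G_def SS_def eq ..
    also have "\<dots> = SS W y' a x"
    proof -
      have aa: "a \<in> NN W y ` Zsupp W y" using a(1) Ay by simp
      have "\<forall>a\<in>NN W y ` Zsupp W y. \<forall>x. SS W y a x = SS W y' a x"
        using conjunct2[OF spec[OF spec[OF R, of y], of y']] .
      then show ?thesis using aa by blast
    qed
    also have "\<dots> = G u x y'" unfolding G_def SS_def eq ..
    finally show ?thesis .
  next
    case False
    have e: "{z\<in>Zsupp W y. f (NN W y z) = u} = {}" for y
      using False NA by auto
    show ?thesis unfolding G_def e by simp
  qed
  have Vindep: "V u x y = V u x y'" for u x y y' unfolding VG by (rule Gindep)
  have c1: "\<forall>a\<in>Us. \<forall>b c. (\<Sum>z\<in>UNIV. F a b c z) * (\<Sum>u\<in>Us. \<Sum>y\<in>UNIV. \<Sum>z\<in>UNIV. F u b y z)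
      = (\<Sum>y\<in>UNIV. \<Sum>z\<in>UNIV. F a b y z) * (\<Sum>u\<in>Us. \<Sum>z\<in>UNIV. F u b c z)"
  proof (intro ballI allI)
    fix a b c
    have s1: "(\<Sum>z\<in>UNIV. F a b y z) = pXY b y * V a b y" for y
      unfolding F_def V_def q_def by (simp add: sum_distrib_left mult.assoc)
    have s2: "(\<Sum>u\<in>Us. \<Sum>z\<in>UNIV. F u b y z) = pXY b y" for y
    proof -
      have "(\<Sum>u\<in>Us. \<Sum>z\<in>UNIV. F u b y z) = (\<Sum>z\<in>UNIV. \<Sum>u\<in>Us. F u b y z)" by (rule sum.swap)
      also have "\<dots> = (\<Sum>z\<in>UNIV. pXY b y * W b y z * (\<Sum>u\<in>Us. I u y z))"
        unfolding F_def q_def by (simp add: sum_distrib_left)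
      also have "\<dots> = pXY b y" using Isum W_sum by (simp add: sum_distrib_left[symmetric])
      finally show ?thesis .
    qed
    have "(\<Sum>u\<in>Us. \<Sum>y\<in>UNIV. \<Sum>z\<in>UNIV. F u b y z) = (\<Sum>y\<in>UNIV. \<Sum>u\<in>Us. \<Sum>z\<in>UNIV. F u b y z)"
      by (rule sum.swap)
    also have "\<dots> = (\<Sum>y\<in>UNIV. pXY b y)" using s2 by simp
    finally have s3: "(\<Sum>u\<in>Us. \<Sum>y\<in>UNIV. \<Sum>z\<in>UNIV. F u b y z) = (\<Sum>y\<in>UNIV. pXY b y)" .
    have s4: "(\<Sum>y\<in>UNIV. \<Sum>z\<in>UNIV. F a b y z) = V a b c * (\<Sum>y\<in>UNIV. pXY b y)"
    proof -
      have "(\<Sum>y\<in>UNIV. \<Sum>z\<in>UNIV. F a b y z) = (\<Sum>y\<in>UNIV. pXY b y * V a b c)"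
      proof (rule sum.cong[OF refl])
        fix y show "(\<Sum>z\<in>UNIV. F a b y z) = pXY b y * V a b c"
          unfolding s1 using Vindep[of a b y c] by simp
      qed
      then show ?thesis by (simp add: sum_distrib_right mult.commute)
    qed
    show "(\<Sum>z\<in>UNIV. F a b c z) * (\<Sum>u\<in>Us. \<Sum>y\<in>UNIV. \<Sum>z\<in>UNIV. F u b y z)
      = (\<Sum>y\<in>UNIV. \<Sum>z\<in>UNIV. F a b y z) * (\<Sum>u\<in>Us. \<Sum>z\<in>UNIV. F u b c z)"
      apply (subst s4, subst s3, subst s2, subst s1) by simp
  qed
  have c3: "\<forall>a\<in>Us. \<forall>b1 b2 c. F a c b1 b2 * (\<Sum>u\<in>Us. \<Sum>x\<in>UNIV. F u x b1 b2)
      = (\<Sum>x\<in>UNIV. F a x b1 b2) * (\<Sum>u\<in>Us. F u c b1 b2)"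
  proof (intro ballI allI)
    fix a y z c
    have t1: "(\<Sum>u\<in>Us. F u c y z) = pXY c y * W c y z"
      unfolding F_def q_def using Isum by (simp add: sum_distrib_left[symmetric])
    have "(\<Sum>u\<in>Us. \<Sum>x\<in>UNIV. F u x y z) = (\<Sum>x\<in>UNIV. \<Sum>u\<in>Us. F u x y z)" by (rule sum.swap)
    also have "\<dots> = (\<Sum>x\<in>UNIV. pXY x y * W x y z)"
      unfolding F_def q_def using Isum by (simp add: sum_distrib_left[symmetric])
    finally have t2: "(\<Sum>u\<in>Us. \<Sum>x\<in>UNIV. F u x y z) = (\<Sum>x\<in>UNIV. pXY x y * W x y z)" .
    have t3: "(\<Sum>x\<in>UNIV. F a x y z) = I a y z * (\<Sum>x\<in>UNIV. pXY x y * W x y z)"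
      unfolding F_def q_def by (simp add: sum_distrib_left mult.commute mult.left_commute)
    show "F a c y z * (\<Sum>u\<in>Us. \<Sum>x\<in>UNIV. F u x y z) = (\<Sum>x\<in>UNIV. F a x y z) * (\<Sum>u\<in>Us. F u c y z)"
      unfolding t1 t2 t3 unfolding F_def q_def by simp
  qed
  have c2: "\<forall>a b1 b2 c. b1 \<in> Us \<longrightarrow> F b1 c b2 a * (\<Sum>x\<in>UNIV. \<Sum>z\<in>UNIV. F b1 x b2 z)
      = (\<Sum>x\<in>UNIV. F b1 x b2 a) * (\<Sum>z\<in>UNIV. F b1 c b2 z)"
  proof (intro allI impI)
    fix z u y c assume "u \<in> Us"
    have r1: "(\<Sum>z\<in>UNIV. F u x y z) = pXY x y * V u x y" for x
      unfolding F_def V_def q_def by (simp add: sum_distrib_left mult.assoc)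
    have r2: "(\<Sum>x\<in>UNIV. F u x y z) = I u y z * (\<Sum>x\<in>UNIV. pXY x y * W x y z)"
      unfolding F_def q_def by (simp add: sum_distrib_left mult.commute mult.left_commute)
    show "F u c y z * (\<Sum>x\<in>UNIV. \<Sum>z\<in>UNIV. F u x y z) = (\<Sum>x\<in>UNIV. F u x y z) * (\<Sum>z\<in>UNIV. F u c y z)"
    proof (cases "I u y z = 0")
      case True
      then show ?thesis unfolding r2 unfolding F_def q_def by simp
    next
      case False
      then have u: "u = idx y z" unfolding I_def by (auto split: if_splits)
      show ?thesis
      proof (cases "z \<in> Zsupp W y")
        case False
        then have "W x y z = 0" for x using W_zero_out[OF nn] by blast
        then show ?thesis unfolding r2 unfolding F_def q_def by simp
      next
        case zs: True
        define al where "al = NN W y z"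
        define s where "s = (\<Sum>x\<in>UNIV. W x y z)"
        define G' where "G' = (\<Sum>z'\<in>UNIV. (\<Sum>x\<in>UNIV. W x y z') * I u y z')"
        have Wz: "W x y z = al x * s" for x unfolding al_def s_def by (rule W_decomp[OF nn])
        have Vu: "V u x y = al x * G'" for x
        proof -
          have "V u x y = (\<Sum>z'\<in>UNIV. al x * ((\<Sum>x\<in>UNIV. W x y z') * I u y z'))"
            unfolding V_def
          proof (rule sum.cong[OF refl])
            fix z'
            show "W x y z' * I u y z' = al x * ((\<Sum>x\<in>UNIV. W x y z') * I u y z')"
            proof (cases "I u y z' = 0")
              case False
              then have e: "idx y z' = idx y z" using u unfolding I_def by (auto split: if_splits)
              show ?thesis
              proof (cases "z' \<in> Zsupp W y")
                case True
                have "NN W y z' \<in> A" "NN W y z \<in> A" using True zs Ay by blast+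
                moreover have "f (NN W y z') = f (NN W y z)" using e True zs unfolding idx_def by simp
                ultimately have "NN W y z' = al" unfolding al_def using f(2) by (auto dest: inj_onD)
                then show ?thesis by (subst W_decomp[OF nn, of x y z']) simp
              next
                case False
                then show ?thesis using W_zero_out[OF nn False] by simp
              qed
            qed simp
          qed
          also have "\<dots> = al x * G'" unfolding G'_def by (simp add: sum_distrib_left)
          finally show ?thesis .
        qed
        have "(\<Sum>x\<in>UNIV. \<Sum>z\<in>UNIV. F u x y z) = G' * (\<Sum>x\<in>UNIV. pXY x y * al x)"
          unfolding r1 Vu by (simp add: sum_distrib_left mult.commute mult.left_commute)
        moreover have "(\<Sum>x\<in>UNIV. F u x y z) = I u y z * s * (\<Sum>x\<in>UNIV. pXY x y * al x)"
          unfolding r2 Wz by (simp add: sum_distrib_left mult.commute mult.left_commute)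
        moreover have "(\<Sum>z\<in>UNIV. F u c y z) = pXY c y * al c * G'" unfolding r1 Vu by simp
        moreover have "F u c y z = pXY c y * al c * s * I u y z" unfolding F_def q_def Wz by simp
        ultimately show ?thesis by simp
      qed
    qed
  qed
  have qnn: "\<forall>u x y z. 0 \<le> q u x y z" unfolding q_def I_def by simp
  have qsum: "\<forall>x y z. (\<Sum>u\<in>Us. q u x y z) = 1" unfolding q_def using Isum by simp
  have jointF: "joint pXY W q = (\<lambda>(u,x,y,z). F u x y z)" unfolding joint_def F_def by simp
  show ?thesis
    unfolding perfectly_secure_computable_def Let_def
    apply (rule exI[of _ Us], rule exI[of _ q])
    apply (simp only: jointF mc1_iff[OF finUs] mc2_iff[OF finUs] mc3_iff[OF finUs])
    apply (intro conjI)
         apply (rule finUs)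
        apply (rule qnn)
       apply (rule qsum)
      apply (rule c1)
     apply (rule c2)
    apply (rule c3)
    done
qed


theorem theorem3:
  fixes pXY :: "'x::finite \<Rightarrow> 'y::finite \<Rightarrow> real"
    and W :: "'x \<Rightarrow> 'y \<Rightarrow> 'z::finite \<Rightarrow> real"
  assumes full_support: "\<forall>x y. pXY x y > 0"
    and pXY_sum: "(\<Sum>x\<in>UNIV. \<Sum>y\<in>UNIV. pXY x y) = 1"
    and W_nonneg: "\<forall>x y z. 0 \<le> W x y z"
    and W_sum: "\<forall>x y. (\<Sum>z\<in>UNIV. W x y z) = 1"
  shows "perfectly_secure_computable pXY W \<longleftrightarrow>
    (\<forall>y y'. kcl W y = kcl W y' \<and>
            alpha W y ` zclasses W y = alpha W y' ` zclasses W y' \<and>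
            (\<forall>C\<in>zclasses W y. \<forall>C'\<in>zclasses W y'. alpha W y C = alpha W y' C' \<longrightarrow>
               (\<forall>x. (\<Sum>z\<in>C. W x y z) = (\<Sum>z\<in>C'. W x y' z))))"
  unfolding rhs_iff[OF W_nonneg]
  using forward[OF full_support W_nonneg W_sum] backward[OF full_support W_nonneg W_sum]
  by blast

end
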